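(* Suppose $\int_{[0,1]}|\log(1-p)|\,\Lambda(dp)<\infty$. Then for every $\varepsilon>0$ there exists a positive integer $K_\varepsilon$ such that for all integers $m,n$ with $1\le m<n$, $P\big(m<N_n(t)\le K_\varepsilon m\text{ for some }t\ge0\big)>1-\varepsilon$.
   Context: Let $\Lambda$ be a nonzero finite measure on $[0,1]$. For $n\ge 1$, the $\Lambda$-coalescent started with $n$ blocks, $(\Pi_n(t))_{t\ge0}$, is the continuous-time Markov chain on partitions of $\{1,\dots,n\}$, started from the partition into singletons, in which, whenever there are $b$ blocks, each particular collection of $k\ge2$ blocks merges into a single block at rate $\lambda_{b,k}=\int_{[0,1]}p^{k-2}(1-p)^{b-k}\,\Lambda(dp)$, and no other transitions occur. $N_n(t)$ denotes the number of blocks of $\Pi_n(t)$. *)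

theory Defs
  imports "HOL-Probability.Probability"
begin

text \<open>Rates of the Lambda-coalescent: lambda_{b,k} = int p^(k-2) (1-p)^(b-k) Lambda(dp).\<close>
definition lam :: "real measure \<Rightarrow> nat \<Rightarrow> nat \<Rightarrow> real" where
  "lam L b k = (\<integral>p. p ^ (k - 2) * (1 - p) ^ (b - k) \<partial>L)"

definition lamtot :: "real measure \<Rightarrow> nat \<Rightarrow> real" where
  "lamtot L b = (\<Sum>k=2..b. real (b choose k) * lam L b k)"

definition merge :: "nat set set \<Rightarrow> nat set set \<Rightarrow> nat set set" where
  "merge P S = insert (\<Union>S) (P - S)"

text \<open>One step of the jump chain of the partition-valued Lambda-coalescent:
  from a partition P with b = card P \<ge> 2 blocks, a particular collection S of
  k \<ge> 2 blocks merges with probability lam b k / lamtot b (rate / total rate).\<close>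
definition step :: "real measure \<Rightarrow> nat set set \<Rightarrow> nat set set pmf" where
  "step L P = (if card P \<le> 1 then return_pmf P
     else map_pmf (merge P)
       (embed_pmf (\<lambda>S. if S \<subseteq> P \<and> 2 \<le> card S
                        then lam L (card P) (card S) / lamtot L (card P) else 0)))"

text \<open>Distribution of the first j jumps (the list of visited states, j+1 entries).\<close>
fun path :: "real measure \<Rightarrow> nat \<Rightarrow> nat set set \<Rightarrow> nat set set list pmf" where
  "path L 0 P = return_pmf [P]"
| "path L (Suc j) P = bind_pmf (step L P) (\<lambda>Q. map_pmf (Cons P) (path L j Q))"

definition singletons :: "nat \<Rightarrow> nat set set" where
  "singletons n = (\<lambda>i. {i}) ` {1..n}"

text \<open>Sequence of states visited by Pi_n (jump chain); n jumps suffice to reach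
  the absorbing one-block state, since each jump decreases the number of blocks.\<close>
definition coal_path :: "real measure \<Rightarrow> nat \<Rightarrow> nat set set list pmf" where
  "coal_path L n = path L n (singletons n)"

end

theory Submission imports Defs "HOL-Real_Asymp.Real_Asymp" begin

lemma measure_bind_pmf_int:
  "measure_pmf.prob (bind_pmf M f) X = (\<integral>x. measure_pmf.prob (f x) X \<partial>M)"
  unfolding measure_pmf_bind
  by (rule measure_pmf.measure_bind[where N="count_space UNIV"])
     (auto simp: space_subprob_algebra measure_pmf.prob_space_axioms intro!: measurable_pmf_measure2 prob_space_imp_subprob_space)

definition good :: "nat set set \<Rightarrow> bool" where
  "good P \<longleftrightarrow> finite P \<and> {} \<notin> P \<and> (\<forall>A\<in>P. \<forall>B\<in>P. A \<noteq> B \<longrightarrow> A \<inter> B = {})"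

definition Sub :: "nat set set \<Rightarrow> nat set set set" where
  "Sub P = {S. S \<subseteq> P \<and> 2 \<le> card S}"

lemma good_singletons: "good (singletons n)"
  unfolding good_def singletons_def by auto

lemma finite_Sub: "finite P \<Longrightarrow> finite (Sub P)"
  unfolding Sub_def by (rule finite_subset[of _ "Pow P"]) auto

lemma merge_good:
  assumes g: "good P" and S: "S \<in> Sub P"
  shows "good (merge P S) \<and> card (merge P S) = card P - card S + 1"
proof -
  have fin: "finite P" and ne: "{} \<notin> P" and dis: "\<forall>A\<in>P. \<forall>B\<in>P. A \<noteq> B \<longrightarrow> A \<inter> B = {}"
    using g by (auto simp: good_def)
  have SP: "S \<subseteq> P" and cS: "2 \<le> card S" using S by (auto simp: Sub_def)
  have finS: "finite S" using SP fin finite_subset by blast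
  have Sne: "S \<noteq> {}" using cS by auto
  have notin: "\<Union>S \<notin> P - S"
  proof
    assume a: "\<Union>S \<in> P - S"
    obtain B where B: "B \<in> S" using Sne by auto
    then have "B \<in> P" "B \<noteq> \<Union>S" using SP a by auto
    then have "B \<inter> \<Union>S = {}" using dis a by auto
    moreover have "B \<subseteq> \<Union>S" using B by auto
    moreover have "B \<noteq> {}" using ne \<open>B \<in> P\<close> by auto
    ultimately show False by auto
  qed
  have c: "card (merge P S) = card P - card S + 1"
    unfolding merge_def using notin fin finS SP
    by (simp add: card_insert_if card_Diff_subset)
  have U: "\<Union>S \<noteq> {}"
  proof -
    obtain B where B: "B \<in> S" using Sne by auto
    then have "B \<noteq> {}" using SP ne by auto
    then show ?thesis using B by auto
  qed
  have D: "\<forall>A\<in>P - S. A \<inter> \<Union>S = {}"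
  proof
    fix A assume A: "A \<in> P - S"
    show "A \<inter> \<Union>S = {}"
    proof (rule ccontr)
      assume "A \<inter> \<Union>S \<noteq> {}"
      then obtain x B where "x \<in> A" "x \<in> B" "B \<in> S" by auto
      moreover have "A \<noteq> B" using A \<open>B \<in> S\<close> by auto
      ultimately show False using dis A SP by blast
    qed
  qed
  have "good (merge P S)"
    unfolding good_def merge_def
  proof (intro conjI)
    show "finite (insert (\<Union> S) (P - S))" using fin by simp
    show "{} \<notin> insert (\<Union> S) (P - S)" using U ne by auto
    show "\<forall>A\<in>insert (\<Union> S) (P - S). \<forall>B\<in>insert (\<Union> S) (P - S). A \<noteq> B \<longrightarrow> A \<inter> B = {}"
      using D dis by (simp add: Int_commute)
  qed
  with c show ?thesis by simp
qed

lemma sum_Sub: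
  fixes g :: "nat \<Rightarrow> real"
  assumes fin: "finite P"
  shows "(\<Sum>S\<in>Sub P. g (card S)) = (\<Sum>k=2..card P. real (card P choose k) * g k)"
proof -
  have "(\<Sum>S\<in>Sub P. g (card S)) = (\<Sum>k=2..card P. \<Sum>S\<in>{x. x \<in> Sub P \<and> card x = k}. g (card S))"
    apply (rule sum.group[symmetric])
    using fin finite_Sub apply auto[2]
    by (auto simp: Sub_def intro: card_mono[OF fin])
  also have "\<dots> = (\<Sum>k=2..card P. real (card P choose k) * g k)"
  proof (rule sum.cong[OF refl])
    fix k assume k: "k \<in> {2..card P}"
    have e: "{x. x \<in> Sub P \<and> card x = k} = {B. B \<subseteq> P \<and> card B = k}"
      using k by (auto simp: Sub_def)
    show "(\<Sum>S\<in>{x. x \<in> Sub P \<and> card x = k}. g (card S)) = real (card P choose k) * g k"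
      unfolding e using n_subsets[OF fin, of k] by simp
  qed
  finally show ?thesis .
qed

locale coal =
  fixes L :: "real measure"
  assumes fin: "finite_measure L"
    and sL: "sets L = sets borel"
    and out: "emeasure L (UNIV - {0..1}) = 0"
    and nz: "emeasure L {0..1} \<noteq> 0"
    and one: "emeasure L {1} = 0"
    and logint: "(\<integral>\<^sup>+ p. ennreal \<bar>ln (1 - p)\<bar> \<partial>L) < \<infinity>"

sublocale coal \<subseteq> finite_measure L by (rule fin)

context coal
begin

lemma spL: "space L = UNIV"
  using sets_eq_imp_space_eq[OF sL] by simp

lemma measL: assumes "f \<in> borel_measurable borel" shows "f \<in> borel_measurable L"
  using assms measurable_cong_sets[OF sL refl, of borel] by metis

lemma AE01: "AE p in L. 0 \<le> p \<and> p < 1"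
proof -
  have a: "AE p in L. p \<in> {0..1}"
    by (rule AE_I'[of "UNIV - {0..1}"]) (auto simp: null_sets_def sL out spL)
  have b: "AE p in L. p \<noteq> 1"
    by (rule AE_I'[of "{1}"]) (auto simp: null_sets_def sL one spL)
  show ?thesis using a b by eventually_elim auto
qed

definition Ltot :: real where "Ltot = measure L UNIV"

lemma Ltot_pos: "0 < Ltot"
proof -
  have "measure L {0..1} \<noteq> 0"
    using nz emeasure_eq_measure by (metis ennreal_0)
  moreover have "measure L {0..1} \<le> measure L UNIV"
    by (rule finite_measure_mono) (auto simp: sL)
  ultimately show ?thesis unfolding Ltot_def using measure_nonneg[of L "{0..1}"] by linarith
qed

lemma int_poly: "integrable L (\<lambda>p. p ^ a * (1 - p) ^ c)"
proof (rule integrable_const_bound[where B=1])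
  show "AE x in L. norm (x ^ a * (1 - x) ^ c) \<le> 1"
    using AE01 by eventually_elim (auto simp: abs_mult power_abs intro!: mult_le_one power_le_one)
  show "(\<lambda>p. p ^ a * (1 - p) ^ c) \<in> borel_measurable L"
    by (rule measL) measurable
qed

lemma lam_nonneg: "0 \<le> lam L b k"
  unfolding lam_def by (rule integral_nonneg_AE) (use AE01 in eventually_elim, auto)

end

lemma hb_bound:
  fixes p :: real
  assumes p: "0 \<le> p" "p \<le> 1" and b: "2 \<le> b"
  shows "real b - 1 \<le> (\<Sum>k=2..b. real (b choose k) * (p ^ (k - 2) * (1 - p) ^ (b - k)) * (real k - 1))"
proof -
  obtain n where n: "b = n + 2" using b by (metis add.commute le_iff_add)
  have "(\<Sum>k=2..b. real (b choose k) * (p ^ (k - 2) * (1 - p) ^ (b - k)) * (real k - 1))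
      = (\<Sum>j=0..n. real (n + 2 choose (j + 2)) * (p ^ j * (1 - p) ^ (n - j)) * (real j + 1))"
  proof -
    define F where "F = (\<lambda>k. real (n + 2 choose k) * (p ^ (k - 2) * (1 - p) ^ (n + 2 - k)) * (real k - 1))"
    have "sum F {0+2..n+2} = sum (\<lambda>i. F (i + 2)) {0..n}"
      by (rule sum.shift_bounds_cl_nat_ivl)
    then have "sum F {2..n+2} = sum (\<lambda>i. F (i + 2)) {0..n}" by (simp only: add_0)
    also have "\<dots> = (\<Sum>j=0..n. real (n + 2 choose (j + 2)) * (p ^ j * (1 - p) ^ (n - j)) * (real j + 1))"
      by (rule sum.cong) (auto simp: F_def)
    finally show ?thesis unfolding n F_def .
  qed
  also have "\<dots> \<ge> (\<Sum>j=0..n. (real n + 1) * (real (n choose j) * p ^ j * (1 - p) ^ (n - j)))"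
  proof (rule sum_mono)
    fix j assume j: "j \<in> {0..n}"
    have e1: "(n + 2) * (n + 1 choose (j + 1)) = (n + 2 choose (j + 2)) * (j + 2)"
      using Suc_times_binomial_eq[of "n+1" "j+1"] by simp
    have e2: "(n + 1) * (n choose j) = (n + 1 choose (j + 1)) * (j + 1)"
      using Suc_times_binomial_eq[of n j] by simp
    have "(n + 2 choose (j + 2)) * (j + 1) * (j + 2) = (n + 1) * (n choose j) * (n + 2)"
      using e1 e2 by (metis mult.commute mult.left_commute)
    also have "\<dots> \<ge> (n + 1) * (n choose j) * (j + 2)" using j by simp
    finally have "(n + 1) * (n choose j) * (j + 2) \<le> (n + 2 choose (j + 2)) * (j + 1) * (j + 2)"
      by (simp only: mult.commute mult.left_commute)
    then have "(n + 1) * (n choose j) \<le> (n + 2 choose (j + 2)) * (j + 1)"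
      using mult_le_cancel2[of "(n + 1) * (n choose j)" "j+2" "(n + 2 choose (j + 2)) * (j + 1)"] by simp
    then have le: "(real n + 1) * real (n choose j) \<le> real (n + 2 choose (j + 2)) * (real j + 1)"
      by (metis of_nat_Suc of_nat_le_iff of_nat_mult Suc_eq_plus1 add.commute)
    define C2 where "C2 = real (n + 2 choose (j + 2))"
    define X where "X = p ^ j * (1 - p) ^ (n - j)"
    have X: "0 \<le> X" using p by (simp add: X_def)
    have "((real n + 1) * real (n choose j)) * X \<le> (C2 * (real j + 1)) * X"
      by (rule mult_right_mono) (use le X in \<open>auto simp: C2_def\<close>)
    then show "(real n + 1) * (real (n choose j) * p ^ j * (1 - p) ^ (n - j))
        \<le> real (n + 2 choose (j + 2)) * (p ^ j * (1 - p) ^ (n - j)) * (real j + 1)"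
      unfolding C2_def[symmetric] X_def[symmetric] by (simp add: X_def mult_ac)
  qed
  also have "(\<Sum>j=0..n. (real n + 1) * (real (n choose j) * p ^ j * (1 - p) ^ (n - j))) = real n + 1"
    using binomial_ring[of p "1 - p" n] by (simp add: sum_distrib_left[symmetric] atLeast0AtMost)
  finally show ?thesis using n by simp
qed


context coal begin

lemma lam_sum_integral:
  "(\<Sum>k\<in>A. c k * lam L b k) = (\<integral>p. (\<Sum>k\<in>A. c k * (p ^ (k - 2) * (1 - p) ^ (b - k))) \<partial>L)"
  unfolding lam_def
  using integral_sum[where I=A and f="\<lambda>k p. c k * (p ^ (k - 2) * (1 - p) ^ (b - k))"]
  by (simp add: int_poly)

lemma drift_sum:
  assumes b: "2 \<le> b"
  shows "(real b - 1) * Ltot \<le> (\<Sum>k=2..b. real (b choose k) * lam L b k * (real k - 1))"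
proof -
  have "(\<Sum>k=2..b. real (b choose k) * lam L b k * (real k - 1))
      = (\<Sum>k=2..b. (real (b choose k) * (real k - 1)) * lam L b k)"
    by (simp add: mult_ac)
  also have "\<dots> = (\<integral>p. (\<Sum>k=2..b. (real (b choose k) * (real k - 1)) * (p ^ (k - 2) * (1 - p) ^ (b - k))) \<partial>L)"
    by (rule lam_sum_integral)
  also have "\<dots> \<ge> (\<integral>p. (real b - 1) \<partial>L)"
  proof (rule integral_mono_AE)
    show "integrable L (\<lambda>p. real b - 1)" by simp
    show "integrable L (\<lambda>p. \<Sum>k = 2..b. real (b choose k) * (real k - 1) * (p ^ (k - 2) * (1 - p) ^ (b - k)))"
      by (auto intro!: int_poly integrable_mult_right)
    show "AE p in L. real b - 1 \<le> (\<Sum>k = 2..b. real (b choose k) * (real k - 1) * (p ^ (k - 2) * (1 - p) ^ (b - k)))"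
      using AE01
    proof eventually_elim
      case (elim p)
      then show ?case using hb_bound[of p b] b by (simp add: mult_ac)
    qed
  qed
  also have "(\<integral>p. (real b - 1) \<partial>L) = (real b - 1) * Ltot"
    by (simp add: Ltot_def spL)
  finally show ?thesis .
qed

lemma lamtot_ge:
  assumes b: "2 \<le> b"
  shows "Ltot \<le> lamtot L b"
proof -
  have "(real b - 1) * Ltot \<le> (\<Sum>k=2..b. real (b choose k) * lam L b k * (real k - 1))"
    by (rule drift_sum[OF b])
  also have "\<dots> \<le> (\<Sum>k=2..b. real (b choose k) * lam L b k * (real b - 1))"
    by (rule sum_mono) (auto intro!: mult_left_mono lam_nonneg)
  also have "\<dots> = (real b - 1) * lamtot L b"
    by (simp add: lamtot_def sum_distrib_left mult_ac)
  finally show ?thesis using b by simp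
qed

lemma lamtot_pos: "2 \<le> b \<Longrightarrow> 0 < lamtot L b"
  using lamtot_ge Ltot_pos by (meson less_le_trans)

lemma step_exp:
  fixes f :: "nat set set \<Rightarrow> real"
  assumes g: "good P" and b: "2 \<le> card P"
  shows "measure_pmf.expectation (step L P) f
     = (\<Sum>S\<in>Sub P. f (merge P S) * (lam L (card P) (card S) / lamtot L (card P)))"
proof -
  define w where "w = (\<lambda>S. if S \<subseteq> P \<and> 2 \<le> card S
                        then lam L (card P) (card S) / lamtot L (card P) else 0)"
  have finP: "finite P" using g by (simp add: good_def)
  have lp: "0 < lamtot L (card P)" using lamtot_pos b by simp
  have nn: "\<And>S. 0 \<le> w S" unfolding w_def using lp lam_nonneg by auto
  have s1: "(\<Sum>S\<in>Sub P. w S) = 1"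
  proof -
    have "(\<Sum>S\<in>Sub P. w S) = (\<Sum>S\<in>Sub P. lam L (card P) (card S) / lamtot L (card P))"
      by (rule sum.cong) (auto simp: w_def Sub_def)
    also have "\<dots> = (\<Sum>k=2..card P. real (card P choose k) * (lam L (card P) k / lamtot L (card P)))"
      by (rule sum_Sub[OF finP])
    also have "\<dots> = (\<Sum>k=2..card P. real (card P choose k) * lam L (card P) k) / lamtot L (card P)"
      by (simp add: sum_divide_distrib)
    also have "\<dots> = lamtot L (card P) / lamtot L (card P)"
      by (simp add: lamtot_def)
    finally show ?thesis using lp by simp
  qed
  have prob: "(\<integral>\<^sup>+S. ennreal (w S) \<partial>count_space UNIV) = 1"
  proof -
    have "(\<integral>\<^sup>+S. ennreal (w S) \<partial>count_space UNIV) = (\<Sum>S\<in>Sub P. ennreal (w S))"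
      by (rule nn_integral_count_space') (auto simp: finite_Sub finP w_def Sub_def)
    also have "\<dots> = ennreal (\<Sum>S\<in>Sub P. w S)"
      by (rule sum_ennreal) (simp add: nn)
    finally show ?thesis using s1 by simp
  qed
  have st: "step L P = map_pmf (merge P) (embed_pmf w)"
    using b unfolding step_def w_def by simp
  have "measure_pmf.expectation (step L P) f = measure_pmf.expectation (embed_pmf w) (\<lambda>S. f (merge P S))"
    unfolding st by simp
  also have "\<dots> = (\<Sum>S\<in>Sub P. f (merge P S) * pmf (embed_pmf w) S)"
  proof (rule integral_measure_pmf_real)
    show "finite (Sub P)" by (rule finite_Sub[OF finP])
    fix S assume "S \<in> set_pmf (embed_pmf w)"
    then have "w S \<noteq> 0" using set_embed_pmf[of w, OF nn prob] by simp
    then show "S \<in> Sub P" by (auto simp: w_def Sub_def split: if_splits)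
  qed
  also have "\<dots> = (\<Sum>S\<in>Sub P. f (merge P S) * (lam L (card P) (card S) / lamtot L (card P)))"
    by (rule sum.cong) (use pmf_embed_pmf[of w, OF nn prob] in \<open>auto simp: w_def Sub_def\<close>)
  finally show ?thesis .
qed


definition Bad :: "nat \<Rightarrow> nat \<Rightarrow> nat set set list set" where
  "Bad m K = {xs. \<forall>Q\<in>set xs. \<not> (m < card Q \<and> card Q \<le> K * m)}"

lemma path_bound:
  fixes W :: "nat \<Rightarrow> real"
  assumes m: "1 \<le> m" and K: "1 \<le> K"
    and W1: "\<And>b. b \<le> m \<Longrightarrow> 1 \<le> W b"
    and W0: "\<And>b. 0 \<le> W b"
    and Wd: "\<And>b. K * m < b \<Longrightarrow>
      (\<Sum>k=2..b. real (b choose k) * lam L b k * W (b - k + 1)) \<le> lamtot L b * W b"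
  shows "good P \<Longrightarrow> card P \<le> j + 1 \<Longrightarrow> measure_pmf.prob (path L j P) (Bad m K) \<le> W (card P)"
proof (induction j arbitrary: P)
  case 0
  then have "card P \<le> m" using m by simp
  then have "1 \<le> W (card P)" by (rule W1)
  then show ?case using measure_pmf.prob_le_1[of "path L 0 P" "Bad m K"] by linarith
next
  case (Suc j)
  note g = Suc.prems(1)
  show ?case
  proof (cases "card P \<le> m")
    case True
    then have "1 \<le> W (card P)" by (rule W1)
    then show ?thesis using measure_pmf.prob_le_1[of "path L (Suc j) P" "Bad m K"] by linarith
  next
    case False
    have pb: "measure_pmf.prob (path L (Suc j) P) (Bad m K)
        = (\<integral>Q. measure_pmf.prob (path L j Q) (Cons P -` Bad m K) \<partial>step L P)"
      by (simp add: measure_bind_pmf_int)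
    show ?thesis
    proof (cases "card P \<le> K * m")
      case True
      then have "Cons P -` Bad m K = {}" using False by (auto simp: Bad_def)
      then show ?thesis using pb W0 by simp
    next
      case False2: False
      define b where "b = card P"
      have b2: "2 \<le> b" using False m unfolding b_def by linarith
      have pre: "Cons P -` Bad m K = Bad m K" using False2 by (auto simp: Bad_def)
      have "measure_pmf.prob (path L (Suc j) P) (Bad m K)
          = (\<Sum>S\<in>Sub P. measure_pmf.prob (path L j (merge P S)) (Bad m K) * (lam L b (card S) / lamtot L b))"
        unfolding pb pre using step_exp[OF g b2[unfolded b_def]] by (simp add: b_def)
      also have "\<dots> \<le> (\<Sum>S\<in>Sub P. W (b - card S + 1) * (lam L b (card S) / lamtot L b))"
      proof (rule sum_mono)
        fix S assume S: "S \<in> Sub P"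
        have mg: "good (merge P S)" and cm: "card (merge P S) = b - card S + 1"
          using merge_good[OF g S] by (auto simp: b_def)
        have "card S \<ge> 2" using S by (simp add: Sub_def)
        then have "card (merge P S) \<le> j + 1" using cm Suc.prems(2) b_def by linarith
        then have "measure_pmf.prob (path L j (merge P S)) (Bad m K) \<le> W (b - card S + 1)"
          using Suc.IH[OF mg] cm by simp
        moreover have "0 \<le> lam L b (card S) / lamtot L b"
          using lam_nonneg lamtot_pos[OF b2] by simp
        ultimately show "measure_pmf.prob (path L j (merge P S)) (Bad m K) * (lam L b (card S) / lamtot L b)
            \<le> W (b - card S + 1) * (lam L b (card S) / lamtot L b)"
          by (rule mult_right_mono)
      qed
      also have "\<dots> = (\<Sum>k=2..b. real (b choose k) * (W (b - k + 1) * (lam L b k / lamtot L b)))"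
        using sum_Sub[of P "\<lambda>k. W (b - k + 1) * (lam L b k / lamtot L b)"] g
        by (simp add: good_def b_def)
      also have "\<dots> = (\<Sum>k=2..b. real (b choose k) * lam L b k * W (b - k + 1)) / lamtot L b"
        by (simp add: sum_divide_distrib mult_ac)
      also have "\<dots> \<le> W b"
        using Wd[of b] False2 lamtot_pos[OF b2] by (simp add: b_def divide_le_eq mult_ac)
      finally show ?thesis by (simp add: b_def)
    qed
  qed
qed

end

definition sig :: "nat \<Rightarrow> nat \<Rightarrow> real \<Rightarrow> real" where
  "sig m c p = (\<Sum>k=2..c. (if c - k + 1 \<le> m then real (c choose k) else 0) * (p ^ (k - 2) * (1 - p) ^ (c - k)))"

lemma sig_nonneg: "0 \<le> p \<Longrightarrow> p \<le> 1 \<Longrightarrow> 0 \<le> sig m c p"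
  unfolding sig_def by (intro sum_nonneg) auto

lemma sig_small:
  fixes p :: real
  assumes p: "0 \<le> p" "p \<le> 1/16" and c: "2 * m < c"
  shows "sig m c p \<le> 16 / 2 ^ c"
proof -
  have "sig m c p \<le> (\<Sum>k=2..c. real (c choose k) * (16 / 4 ^ c))"
    unfolding sig_def
  proof (rule sum_mono)
    fix k assume k: "k \<in> {2..c}"
    show "(if c - k + 1 \<le> m then real (c choose k) else 0) * (p ^ (k - 2) * (1 - p) ^ (c - k))
        \<le> real (c choose k) * (16 / 4 ^ c)"
    proof (cases "c - k + 1 \<le> m")
      case True
      then have e: "c - 2 \<le> 2 * (k - 2)" using c k by auto
      have "p ^ (k - 2) \<le> (1/16) ^ (k - 2)" using p by (intro power_mono) auto
      also have "\<dots> = ((1/4) ^ 2) ^ (k - 2)" by (simp add: power2_eq_square)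
      also have "\<dots> = (1/4) ^ (2 * (k - 2))" by (simp only: power_mult)
      also have "\<dots> \<le> (1/4) ^ (c - 2)" by (rule power_decreasing[OF e]) auto
      also have "\<dots> = 16 / 4 ^ c"
      proof -
        have "c \<ge> 2" using k by simp
        then obtain d where "c = d + 2" by (metis add.commute le_iff_add)
        then show ?thesis by (simp add: power_add power_one_over)
      qed
      finally have a: "p ^ (k - 2) \<le> 16 / 4 ^ c" .
      have b: "(1 - p) ^ (c - k) \<le> 1" using p by (intro power_le_one) auto
      have "p ^ (k - 2) * (1 - p) ^ (c - k) \<le> 16 / 4 ^ c"
        using mult_mono[OF a b] p by simp
      from mult_left_mono[OF this, of "real (c choose k)"] show ?thesis using True by simp
    qed (simp)
  qed
  also have "\<dots> = (\<Sum>k=2..c. real (c choose k)) * (16 / 4 ^ c)"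
    by (rule sum_distrib_right[symmetric])
  also have "\<dots> \<le> 2 ^ c * (16 / 4 ^ c)"
  proof (rule mult_right_mono)
    have "(\<Sum>k=2..c. real (c choose k)) \<le> (\<Sum>k\<le>c. real (c choose k))"
      by (rule sum_mono2) auto
    also have "\<dots> = 2 ^ c" using choose_row_sum[of c] by (metis of_nat_numeral of_nat_power of_nat_sum)
    finally show "(\<Sum>k=2..c. real (c choose k)) \<le> 2 ^ c" .
  qed simp
  also have "2 ^ c * (16 / 4 ^ c) = 16 / (2::real) ^ c"
  proof -
    have "(4::real) ^ c = 2 ^ c * 2 ^ c" by (simp add: power_mult_distrib[symmetric])
    then show ?thesis by simp
  qed
  finally show ?thesis .
qed

lemma binom_absorb_real:
  assumes "k \<le> c"
  shows "real (c choose k) * (real c + 1) = real (Suc c choose k) * (real c + 1 - real k)"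
proof -
  have "(Suc c - k) * (Suc c choose k) = Suc c * (c choose k)"
    using binomial_absorb_comp[of "Suc c" k] by simp
  then have "real (Suc c - k) * real (Suc c choose k) = real (Suc c) * real (c choose k)"
    by (metis of_nat_mult)
  moreover have "real (Suc c - k) = real c + 1 - real k" using assms by (simp add: of_nat_diff)
  ultimately show ?thesis by (simp add: mult_ac)
qed

lemma sig_big:
  fixes p :: real
  assumes p: "1/16 \<le> p" "p < 1" and m: "1 \<le> m"
  shows "sig m c p \<le> 256" and "sig m c p \<le> 256 * (real m / ((real c + 1) * (1 - p)))"
proof -
  define q where "q = 1 - p"
  have q: "0 < q" "q \<le> 1" using p by (auto simp: q_def)
  have p0: "0 \<le> p" using p by simp
  define T where "T = (\<Sum>k=2..c. (if c - k + 1 \<le> m then real (c choose k) else 0) * (p ^ k * q ^ (c - k)))"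
  have sT: "sig m c p \<le> 256 * T"
    unfolding sig_def T_def sum_distrib_left
  proof (rule sum_mono)
    fix k assume k: "k \<in> {2..c}"
    have "p ^ k = p ^ (k - 2) * p ^ 2"
    proof -
      obtain j where "k = j + 2" using k by (metis add.commute atLeastAtMost_iff le_iff_add)
      then show ?thesis by (simp add: power_add power2_eq_square)
    qed
    moreover have "p ^ 2 \<ge> (1/16) ^ 2" using p by (intro power_mono) auto
    moreover have "0 \<le> p ^ (k - 2)" using p0 by simp
    ultimately have "p ^ (k - 2) * 1 \<le> p ^ (k - 2) * (256 * p ^ 2)"
      by (intro mult_left_mono) (auto simp: power2_eq_square)
    then have "p ^ (k - 2) \<le> 256 * p ^ k" using \<open>p ^ k = p ^ (k - 2) * p ^ 2\<close> by (simp add: mult_ac)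
    then have h: "p ^ (k - 2) * q ^ (c - k) \<le> 256 * p ^ k * q ^ (c - k)"
      using q by (intro mult_right_mono) auto
    show "(if c - k + 1 \<le> m then real (c choose k) else 0) * (p ^ (k - 2) * (1 - p) ^ (c - k))
        \<le> 256 * ((if c - k + 1 \<le> m then real (c choose k) else 0) * (p ^ k * q ^ (c - k)))"
      using mult_left_mono[OF h, of "real (c choose k)"]
      by (cases "c - k + 1 \<le> m") (auto simp: q_def mult_ac)
  qed
  have "T \<le> (\<Sum>k\<le>c. real (c choose k) * p ^ k * q ^ (c - k))"
    unfolding T_def
    by (rule order_trans[OF sum_mono sum_mono2]) (use p0 q in auto)
  also have "\<dots> = 1" using binomial_ring[of p q c] by (simp add: q_def)
  finally have T1: "T \<le> 1" .
  show "sig m c p \<le> 256" using sT T1 by linarith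
  have "T \<le> (\<Sum>k\<le>c. real (c choose k) * p ^ k * q ^ (c - k) * (real m / (real c + 1 - real k)))"
    unfolding T_def
  proof (rule order_trans[OF sum_mono sum_mono2])
    fix k assume k: "k \<in> {2..c}"
    show "(if c - k + 1 \<le> m then real (c choose k) else 0) * (p ^ k * q ^ (c - k))
       \<le> real (c choose k) * p ^ k * q ^ (c - k) * (real m / (real c + 1 - real k))"
    proof (cases "c - k + 1 \<le> m")
      case True
      have "1 \<le> real m / (real c + 1 - real k)"
        using True k by (simp add: le_divide_eq of_nat_diff)
      moreover have "0 \<le> real (c choose k) * p ^ k * q ^ (c - k)" using p0 q by simp
      ultimately have "real (c choose k) * p ^ k * q ^ (c - k) * 1 \<le> real (c choose k) * p ^ k * q ^ (c - k) * (real m / (real c + 1 - real k))"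
        by (intro mult_left_mono)
      then show ?thesis using True by (simp add: mult_ac)
    next
      case False
      have "0 \<le> real m / (real c + 1 - real k)" using k by simp
      moreover have "0 \<le> real (c choose k) * p ^ k * q ^ (c - k)" using p0 q by simp
      ultimately have "0 \<le> real (c choose k) * p ^ k * q ^ (c - k) * (real m / (real c + 1 - real k))"
        by (rule mult_nonneg_nonneg[rotated])
      then show ?thesis using False by simp
    qed
  next
    show "finite {..c}" by simp
    show "{2..c} \<subseteq> {..c}" by auto
    fix k assume "k \<in> {..c} - {2..c}"
    then show "0 \<le> real (c choose k) * p ^ k * q ^ (c - k) * (real m / (real c + 1 - real k))"
      using p0 q by simp
  qed
  also have "\<dots> = (\<Sum>k\<le>c. real m / (real c + 1) * (real (Suc c choose k) * p ^ k * q ^ (c - k)))"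
  proof (rule sum.cong[OF refl])
    fix k assume k: "k \<in> {..c}"
    have e: "real (c choose k) = real (Suc c choose k) * (real c + 1 - real k) / (real c + 1)"
      using binom_absorb_real[of k c] k by (simp add: field_simps)
    have D: "real c + 1 - real k \<noteq> 0" using k by simp
    have aux: "\<And>C1 D E X M::real. D \<noteq> 0 \<Longrightarrow> C1 * D / E * X * (M / D) = M / E * (C1 * X)"
      by (simp add: field_simps)
    show "real (c choose k) * p ^ k * q ^ (c - k) * (real m / (real c + 1 - real k))
        = real m / (real c + 1) * (real (Suc c choose k) * p ^ k * q ^ (c - k))"
      unfolding e using aux[OF D, of "real (Suc c choose k)" "real c + 1" "p ^ k * q ^ (c - k)" "real m"]
      by (simp only: mult.assoc)
  qed
  also have "\<dots> = real m / (real c + 1) * (\<Sum>k\<le>c. real (Suc c choose k) * p ^ k * q ^ (c - k))"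
    by (simp add: sum_distrib_left)
  also have "(\<Sum>k\<le>c. real (Suc c choose k) * p ^ k * q ^ (c - k)) \<le> 1 / q"
  proof -
    have "(\<Sum>k\<le>c. real (Suc c choose k) * p ^ k * q ^ (c - k)) * q
        = (\<Sum>k\<le>c. real (Suc c choose k) * p ^ k * q ^ (Suc c - k))"
      by (auto simp: sum_distrib_right Suc_diff_le intro!: sum.cong)
    also have "\<dots> \<le> (\<Sum>k\<le>Suc c. real (Suc c choose k) * p ^ k * q ^ (Suc c - k))"
      by (rule sum_mono2) (use p0 q in auto)
    also have "\<dots> = 1" using binomial_ring[of p q "Suc c"] by (simp add: q_def)
    finally show ?thesis using q by (simp add: field_simps)
  qed
  then have "real m / (real c + 1) * (\<Sum>k\<le>c. real (Suc c choose k) * p ^ k * q ^ (c - k))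
      \<le> real m / (real c + 1) * (1 / q)"
    by (intro mult_left_mono) auto
  finally have "T \<le> real m / ((real c + 1) * q)" by simp
  then show "sig m c p \<le> 256 * (real m / ((real c + 1) * (1 - p)))"
    using sT by (simp add: q_def)
qed


lemma sum_inv_sq:
  assumes N: "1 \<le> N"
  shows "(\<Sum>c=N+1..M. 1 / (real c)^2) \<le> 1 / real N"
proof (cases "N \<le> M")
  case True
  have "(\<Sum>c=N+1..M. 1 / (real c)^2) \<le> 1 / real N - 1 / real M"
    using True
  proof (induction M rule: dec_induct)
    case base then show ?case by simp
  next
    case (step n)
    have n1: "1 \<le> real n" using step N by simp
    have e: "1 / real n - 1 / real (Suc n) = 1 / (real n * real (Suc n))"
      using n1 by (simp add: field_simps)
    have "1 / (real (Suc n))^2 \<le> 1 / (real n * real (Suc n))"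
      unfolding power2_eq_square by (rule divide_left_mono) (use n1 in auto)
    then have "1 / (real (Suc n))^2 \<le> 1 / real n - 1 / real (Suc n)" using e by simp
    then show ?case using step by (simp add: sum.cl_ivl_Suc)
  qed
  also have "\<dots> \<le> 1 / real N" by simp
  finally show ?thesis .
next
  case False
  then show ?thesis by simp
qed

lemma sum_inv_ln:
  assumes N: "1 \<le> N" and NM: "N \<le> M"
  shows "(\<Sum>c=N+1..M. 1 / real c) \<le> ln (real M) - ln (real N)"
  using NM
proof (induction M rule: dec_induct)
  case base then show ?case by simp
next
  case (step n)
  have n1: "1 \<le> real n" using step N by simp
  have "ln (real n / real (Suc n)) \<le> real n / real (Suc n) - 1"
    by (rule ln_le_minus_one) (use n1 in simp)
  moreover have "ln (real n / real (Suc n)) = ln (real n) - ln (real (Suc n))"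
    using n1 by (simp add: ln_div)
  moreover have "real n / real (Suc n) - 1 = - (1 / real (Suc n))"
    using n1 by (simp add: field_simps)
  ultimately have "1 / real (Suc n) \<le> ln (real (Suc n)) - ln (real n)" by linarith
  then show ?case using step by (simp add: sum.cl_ivl_Suc)
qed

lemma sum_geom2:
  "(\<Sum>c=N+1..M. 1 / (2::real) ^ c) \<le> 1 / 2 ^ N"
proof (cases "N \<le> M")
  case True
  have "(\<Sum>c=N+1..M. 1 / (2::real) ^ c) \<le> 1 / 2 ^ N - 1 / 2 ^ M"
    using True
  proof (induction M rule: dec_induct)
    case base then show ?case by simp
  next
    case (step n)
    have "1 / (2::real) ^ (Suc n) = 1 / 2 ^ n - 1 / 2 ^ (Suc n)" by simp
    then show ?case using step by (simp add: sum.cl_ivl_Suc)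
  qed
  also have "\<dots> \<le> 1 / 2 ^ N" by simp
  finally show ?thesis .
next
  case False
  then show ?thesis by simp
qed

definition Hf :: "nat \<Rightarrow> real \<Rightarrow> real" where
  "Hf K q = (if 1 \<le> real K * q then 1 / (real K * q) else ln (1 / (real K * q)) + 2)"

lemma hsum:
  fixes q :: real
  assumes q: "0 < q" "q \<le> 1" and m: "1 \<le> m" and K: "2 \<le> K"
  shows "(\<Sum>c=K*m+1..b. min 1 (real m / (real c * q)) / real c) \<le> Hf K q"
proof -
  have Km: "1 \<le> K * m" using m K by (simp add: one_le_mult_iff)
  have term2: "min 1 (real m / (real c * q)) / real c \<le> (real m / q) * (1 / (real c)^2)" for c
  proof (cases "c = 0")
    case False
    have "min 1 (real m / (real c * q)) / real c \<le> (real m / (real c * q)) / real c"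
      by (intro divide_right_mono) auto
    also have "\<dots> = (real m / q) * (1 / (real c)^2)" by (simp add: field_simps power2_eq_square)
    finally show ?thesis .
  qed simp
  show ?thesis
  proof (cases "1 \<le> real K * q")
    case True
    have "(\<Sum>c=K*m+1..b. min 1 (real m / (real c * q)) / real c)
        \<le> (\<Sum>c=K*m+1..b. (real m / q) * (1 / (real c)^2))"
      by (rule sum_mono) (rule term2)
    also have "\<dots> = (real m / q) * (\<Sum>c=K*m+1..b. 1 / (real c)^2)"
      by (simp add: sum_distrib_left)
    also have "\<dots> \<le> (real m / q) * (1 / real (K * m))"
      by (intro mult_left_mono sum_inv_sq Km) (use q in auto)
    also have "\<dots> = 1 / (real K * q)" using m q by (simp add: field_simps)
    finally show ?thesis using True by (simp add: Hf_def)
  next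
    case False
    define N where "N = nat \<lfloor>real m / q\<rfloor>"
    have mq: "real (K * m) \<le> real m / q"
      using False q m by (simp add: field_simps)
    have mq2: "2 \<le> real m / q"
    proof -
      have "2 * 1 \<le> K * m" using m K by (intro mult_le_mono) auto
      then have "2 \<le> K * m" by simp
      then have "2 \<le> real (K * m)" by linarith
      then show ?thesis using mq by linarith
    qed
    have NKm: "K * m \<le> N" unfolding N_def using mq by (simp add: le_nat_floor)
    have Nle: "real N \<le> real m / q" unfolding N_def
      using q by (simp add: of_nat_floor)
    have Nge: "real m / q - 1 < real N"
    proof -
      have "0 \<le> \<lfloor>real m / q\<rfloor>" using q by simp
      then have "real (nat \<lfloor>real m / q\<rfloor>) = real_of_int \<lfloor>real m / q\<rfloor>" by simp
      moreover have "real m / q < real_of_int (\<lfloor>real m / q\<rfloor> + 1)" using floor_correct by blast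
      ultimately show ?thesis by (simp add: N_def)
    qed
    have N1: "1 \<le> N" using NKm Km by linarith
    have "(\<Sum>c=K*m+1..b. min 1 (real m / (real c * q)) / real c)
        \<le> (\<Sum>c=K*m+1..b. (if c \<le> N then 1 / real c else 0) + (if N < c then (real m / q) * (1 / (real c)^2) else 0))"
    proof (rule sum_mono)
      fix c assume c: "c \<in> {K*m+1..b}"
      show "min 1 (real m / (real c * q)) / real c \<le> (if c \<le> N then 1 / real c else 0) + (if N < c then (real m / q) * (1 / (real c)^2) else 0)"
      proof (cases "c \<le> N")
        case True
        have "min 1 (real m / (real c * q)) / real c \<le> 1 / real c"
          by (intro divide_right_mono) auto
        then show ?thesis using True by simp
      next
        case False
        then show ?thesis using term2[of c] by simp
      qed
    qed
    also have "\<dots> = (\<Sum>c=K*m+1..b. (if c \<le> N then 1 / real c else 0)) + (\<Sum>c=K*m+1..b. (if N < c then (real m / q) * (1 / (real c)^2) else 0))"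
      by (rule sum.distrib)
    also have "(\<Sum>c=K*m+1..b. (if c \<le> N then 1 / real c else 0)) \<le> (\<Sum>c=K*m+1..N. 1 / real c)"
    proof -
      have "(\<Sum>c=K*m+1..b. (if c \<le> N then 1 / real c else 0)) = (\<Sum>c\<in>{K*m+1..b} \<inter> {c. c \<le> N}. 1 / real c)"
        by (simp add: sum.inter_restrict)
      also have "\<dots> \<le> (\<Sum>c=K*m+1..N. 1 / real c)"
        by (rule sum_mono2) auto
      finally show ?thesis .
    qed
    also have "(\<Sum>c=K*m+1..N. 1 / real c) \<le> ln (real N) - ln (real (K * m))"
      by (rule sum_inv_ln[OF Km NKm])
    also have "(\<Sum>c=K*m+1..b. (if N < c then (real m / q) * (1 / (real c)^2) else 0)) \<le> 2"
    proof -
      have "(\<Sum>c=K*m+1..b. (if N < c then (real m / q) * (1 / (real c)^2) else 0))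
          = (\<Sum>c\<in>{K*m+1..b} \<inter> {c. N < c}. (real m / q) * (1 / (real c)^2))"
        by (subst sum.inter_restrict) simp_all
      also have "\<dots> \<le> (\<Sum>c=N+1..b. (real m / q) * (1 / (real c)^2))"
        by (rule sum_mono2) (use q in auto)
      also have "\<dots> = (real m / q) * (\<Sum>c=N+1..b. 1 / (real c)^2)"
        by (simp add: sum_distrib_left)
      also have "\<dots> \<le> (real m / q) * (1 / real N)"
        by (intro mult_left_mono sum_inv_sq N1) (use q in auto)
      also have "\<dots> \<le> 2"
      proof -
        have "real m / q \<le> 2 * real N" using Nge mq2 by linarith
        moreover have "0 < real N" using N1 by simp
        ultimately show ?thesis using q by (simp add: divide_le_eq mult_ac)
      qed
      finally show ?thesis .
    qed
    also have "ln (real N) - ln (real (K * m)) \<le> ln (1 / (real K * q))"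
    proof -
      have "ln (real N) \<le> ln (real m / q)" using Nle N1 by simp
      moreover have "ln (real m / q) - ln (real (K * m)) = ln (1 / (real K * q))"
        using m q K by (simp add: ln_div ln_mult)
      ultimately show ?thesis by linarith
    qed
    finally show ?thesis using False by (simp add: Hf_def)
  qed
qed


definition sfun :: "nat \<Rightarrow> nat \<Rightarrow> real \<Rightarrow> real" where
  "sfun m c p = (if p < 1/16 then 16 / 2 ^ c else 256 * min 1 (real m / (real c * (1 - p))))"

definition Bf :: "nat \<Rightarrow> real \<Rightarrow> real" where
  "Bf K p = (if p < 1/16 then 32 / 2 ^ K else 256 * (min 1 (1 / (real K * (1 - p))) + Hf K (1 - p)))"

lemma sig_le_sfun:
  assumes p: "0 \<le> p" "p < 1" and m: "1 \<le> m" and c: "2 * m < c"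
  shows "sig m c p \<le> sfun m c p"
proof (cases "p < 1/16")
  case True
  then show ?thesis using sig_small[of p m c] p c by (simp add: sfun_def)
next
  case False
  have a: "sig m c p \<le> 256" and b: "sig m c p \<le> 256 * (real m / ((real c + 1) * (1 - p)))"
    using sig_big[of p m c] False p m by auto
  have "real m / ((real c + 1) * (1 - p)) \<le> real m / (real c * (1 - p))"
    using p c by (intro divide_left_mono mult_pos_pos mult_right_mono) auto
  then have "sig m c p \<le> 256 * (real m / (real c * (1 - p)))" using b by linarith
  then show ?thesis using a False by (simp add: sfun_def min_def)
qed

lemma sfun_nonneg: "p < 1 \<Longrightarrow> 0 \<le> sfun m c p"
  by (simp add: sfun_def)

lemma sfun_le: "p < 1 \<Longrightarrow> sfun m c p \<le> 256"
proof -
  have "16 / (2::real) ^ c \<le> 16" by (simp add: divide_le_eq)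
  then show "sfun m c p \<le> 256" by (simp add: sfun_def)
qed

lemma sfun_anti:
  assumes p: "p < 1" and c: "1 \<le> c" "c \<le> c'"
  shows "sfun m c' p \<le> sfun m c p"
proof (cases "p < 1/16")
  case True
  have "(2::real) ^ c \<le> 2 ^ c'" using c by (intro power_increasing) auto
  then have "16 / (2::real) ^ c' \<le> 16 / 2 ^ c" by (intro divide_left_mono) auto
  then show ?thesis using True by (simp add: sfun_def)
next
  case False
  have "real m / (real c' * (1 - p)) \<le> real m / (real c * (1 - p))"
    using p c by (intro divide_left_mono mult_pos_pos mult_right_mono) auto
  then show ?thesis using False by (simp add: sfun_def)
qed

lemma point_bound:
  assumes p: "0 \<le> p" "p < 1" and m: "1 \<le> m" and K: "2 \<le> K"
  shows "sfun m (K*m+1) p + (\<Sum>c=K*m+1..b. sfun m c p / real c) \<le> Bf K p"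
proof -
  have KmK: "K \<le> K * m" using m by simp
  show ?thesis
  proof (cases "p < 1/16")
    case True
    have "K \<le> K*m+1" using KmK by linarith
    then have "(2::real) ^ K \<le> 2 ^ (K*m+1)" by (intro power_increasing) auto
    then have "16 / (2::real) ^ (K*m+1) \<le> 16 / 2 ^ K" by (intro divide_left_mono) auto
    moreover have "sfun m (K*m+1) p = 16 / 2 ^ (K*m+1)" unfolding sfun_def by (simp only: if_P[OF True])
    ultimately have a: "sfun m (K*m+1) p \<le> 16 / 2 ^ K" by simp
    have "(\<Sum>c=K*m+1..b. sfun m c p / real c) \<le> (\<Sum>c=K*m+1..b. 16 * (1 / 2 ^ c))"
    proof (rule sum_mono)
      fix c assume c: "c \<in> {K*m+1..b}"
      then have "1 \<le> real c" by simp
      then have "16 / 2 ^ c / real c \<le> 16 / (2::real) ^ c"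
        by (simp add: divide_le_eq_1 field_simps)
      then show "sfun m c p / real c \<le> 16 * (1 / 2 ^ c)" using True by (simp add: sfun_def)
    qed
    also have "\<dots> = 16 * (\<Sum>c=K*m+1..b. 1 / (2::real) ^ c)" by (simp add: sum_distrib_left)
    also have "\<dots> \<le> 16 * (1 / 2 ^ (K*m))" by (intro mult_left_mono sum_geom2) auto
    also have "\<dots> \<le> 16 * (1 / 2 ^ K)"
    proof -
      have "(2::real) ^ K \<le> 2 ^ (K*m)" using KmK by (intro power_increasing) auto
      then show ?thesis by (intro mult_left_mono divide_left_mono) auto
    qed
    finally show ?thesis using a True by (simp add: Bf_def)
  next
    case False
    define q where "q = 1 - p"
    have q: "0 < q" "q \<le> 1" using p False by (auto simp: q_def)
    have "real m / ((real K * real m + 1) * q) \<le> real m / ((real K * real m) * q)"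
    proof -
      have "0 \<le> real K * real m" by simp
      then have "0 < real K * real m + 1" by linarith
      then show ?thesis using q m K by (intro divide_left_mono mult_pos_pos mult_right_mono) auto
    qed
    also have "\<dots> = 1 / (real K * q)" using m by simp
    finally have a0: "real m / ((real K * real m + 1) * q) \<le> 1 / (real K * q)" .
    have "min 1 (real m / ((real K * real m + 1) * q)) \<le> min 1 (1 / (real K * q))"
      by (rule min.mono[OF order_refl a0])
    moreover have "sfun m (K*m+1) p = 256 * min 1 (real m / ((real K * real m + 1) * q))"
      unfolding sfun_def q_def by (simp only: if_not_P[OF False] of_nat_add of_nat_mult of_nat_1)
    ultimately have a: "sfun m (K*m+1) p \<le> 256 * min 1 (1 / (real K * q))" by simp
    have "(\<Sum>c=K*m+1..b. sfun m c p / real c) = 256 * (\<Sum>c=K*m+1..b. min 1 (real m / (real c * q)) / real c)"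
      using False by (simp add: sfun_def q_def sum_distrib_left)
    also have "\<dots> \<le> 256 * Hf K q"
      using hsum[OF q m K, of b] by simp
    finally show ?thesis using a False by (simp add: Bf_def q_def)
  qed
qed

lemma Hf_bounds:
  assumes q: "0 < q" "q \<le> 1" and K: "1 \<le> K"
  shows "0 \<le> Hf K q" "Hf K q \<le> 2 + \<bar>ln q\<bar>"
proof -
  show "0 \<le> Hf K q"
  proof (cases "1 \<le> real K * q")
    case False
    then have "1 < 1 / (real K * q)" using q K by (simp add: field_simps)
    then have "0 < ln (1 / (real K * q))" by (rule ln_gt_zero)
    then show ?thesis using False by (simp add: Hf_def)
  qed (use q in \<open>simp add: Hf_def\<close>)
  show "Hf K q \<le> 2 + \<bar>ln q\<bar>"
  proof (cases "1 \<le> real K * q")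
    case True
    then have "1 / (real K * q) \<le> 1" by simp
    moreover have "Hf K q = 1 / (real K * q)" using True by (simp add: Hf_def)
    ultimately show ?thesis using abs_ge_zero[of "ln q"] by linarith
  next
    case False
    have "ln (1 / (real K * q)) = - ln (real K) - ln q" using q K by (simp add: ln_div ln_mult)
    moreover have "0 \<le> ln (real K)" using K by simp
    ultimately show ?thesis using False by (simp add: Hf_def)
  qed
qed

lemma Bf_bounds:
  assumes p: "0 \<le> p" "p < 1" and K: "1 \<le> K"
  shows "0 \<le> Bf K p" "Bf K p \<le> 32 + 256 * (3 + \<bar>ln (1 - p)\<bar>)"
proof -
  have q: "0 < 1 - p" "1 - p \<le> 1" using p by auto
  note H = Hf_bounds[OF q K]
  have "0 \<le> min 1 (1 / (real K * (1 - p)))" using q by simp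
  then show "0 \<le> Bf K p" using H by (simp add: Bf_def)
  have "min 1 (1 / (real K * (1 - p))) \<le> 1" by simp
  moreover have "32 / (2::real) ^ K \<le> 32" by (simp add: divide_le_eq)
  ultimately show "Bf K p \<le> 32 + 256 * (3 + \<bar>ln (1 - p)\<bar>)"
  proof (cases "p < 1/16")
    case True
    then have "Bf K p = 32 / 2 ^ K" by (simp add: Bf_def)
    then show ?thesis using \<open>32 / (2::real) ^ K \<le> 32\<close> abs_ge_zero[of "ln (1 - p)"] by (smt (verit))
  next
    case False
    then have "Bf K p = 256 * (min 1 (1 / (real K * (1 - p))) + Hf K (1 - p))" by (simp add: Bf_def)
    then show ?thesis using H \<open>min 1 (1 / (real K * (1 - p))) \<le> 1\<close> by (smt (verit))
  qed
qed


lemma inv_lim: "(\<lambda>i::nat. 1 / (real i + 2)) \<longlonglongrightarrow> 0"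
  by real_asymp

lemma Bf_lim:
  assumes p: "0 \<le> p" "p < 1"
  shows "(\<lambda>i. Bf (i + 2) p) \<longlonglongrightarrow> 0"
proof (cases "p < 1/16")
  case True
  have "(\<lambda>i::nat. 32 * (1 / 2 ^ (i + 2))) \<longlonglongrightarrow> (32::real) * 0"
    by (intro tendsto_mult tendsto_const) real_asymp
  then show ?thesis using True by (simp add: Bf_def)
next
  case False
  define q where "q = 1 - p"
  have q: "0 < q" using p by (simp add: q_def)
  have l1: "(\<lambda>i::nat. (1 / q) * (1 / (real i + 2))) \<longlonglongrightarrow> (1 / q) * 0"
    by (intro tendsto_mult tendsto_const inv_lim)
  have e: "1 / (real (i + 2) * q) = (1 / q) * (1 / (real i + 2))" for i
    by (simp add: field_simps)
  have l2: "(\<lambda>i::nat. 1 / (real (i + 2) * q)) \<longlonglongrightarrow> 0"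
    using l1 unfolding e by simp
  have l3: "(\<lambda>i::nat. 256 * (min 1 (1 / (real (i + 2) * q)) + 1 / (real (i + 2) * q))) \<longlonglongrightarrow> 256 * (min 1 0 + 0)"
    by (intro tendsto_mult tendsto_add tendsto_min tendsto_const l2)
  have ev: "eventually (\<lambda>i. 256 * (min 1 (1 / (real (i + 2) * q)) + 1 / (real (i + 2) * q)) = Bf (i + 2) p) sequentially"
  proof (rule eventually_sequentiallyI[of "nat \<lceil>1 / q\<rceil>"])
    fix i assume i: "nat \<lceil>1 / q\<rceil> \<le> i"
    have "1 / q \<le> real i" using i by linarith
    then have "1 / q \<le> real (i + 2)" by simp
    then have "1 \<le> real (i + 2) * q" using q by (simp add: field_simps)
    then show "256 * (min 1 (1 / (real (i + 2) * q)) + 1 / (real (i + 2) * q)) = Bf (i + 2) p"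
      using False by (simp add: Bf_def Hf_def q_def)
  qed
  show ?thesis using Lim_transform_eventually[OF l3 ev] by simp
qed

context coal begin

definition rho :: "nat \<Rightarrow> nat \<Rightarrow> real" where
  "rho m c = (\<Sum>k=2..c. (if c - k + 1 \<le> m then real (c choose k) else 0) * lam L c k)"

lemma rho_int: "rho m c = (\<integral>p. sig m c p \<partial>L)"
  unfolding rho_def sig_def by (rule lam_sum_integral)

lemma int_sig: "integrable L (sig m c)"
  unfolding sig_def by (auto intro!: int_poly)

lemma meas_sfun: "sfun m c \<in> borel_measurable L"
  unfolding sfun_def by (rule measL) measurable

lemma int_sfun: "integrable L (sfun m c)"
proof (rule integrable_const_bound[where B=256])
  show "AE x in L. norm (sfun m c x) \<le> 256"
    using AE01 by eventually_elim (use sfun_nonneg sfun_le in auto)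
qed (rule meas_sfun)

definition rhat :: "nat \<Rightarrow> nat \<Rightarrow> real" where
  "rhat m c = (\<integral>p. sfun m c p \<partial>L)"

lemma rho_le_rhat: "1 \<le> m \<Longrightarrow> 2 * m < c \<Longrightarrow> rho m c \<le> rhat m c"
  unfolding rho_int rhat_def
  by (rule integral_mono_AE[OF int_sig int_sfun]) (use AE01 in \<open>eventually_elim, auto intro: sig_le_sfun\<close>)

lemma rhat_nonneg: "0 \<le> rhat m c"
  unfolding rhat_def by (rule integral_nonneg_AE) (use AE01 in \<open>eventually_elim, auto intro: sfun_nonneg\<close>)

lemma rhat_anti: "1 \<le> c \<Longrightarrow> c \<le> c' \<Longrightarrow> rhat m c' \<le> rhat m c"
  unfolding rhat_def
  by (rule integral_mono_AE[OF int_sfun int_sfun]) (use AE01 in \<open>eventually_elim, auto intro: sfun_anti\<close>)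

definition Vf :: "nat \<Rightarrow> nat \<Rightarrow> nat \<Rightarrow> real" where
  "Vf m K b = (if b \<le> K * m then 0 else (2 / Ltot) * (rhat m (K*m+1) + (\<Sum>c=K*m+1..b. rhat m c / real c)))"

lemma Vf_nonneg: "0 \<le> Vf m K b"
proof -
  have "0 \<le> rhat m (K*m+1) + (\<Sum>c=K*m+1..b. rhat m c / real c)"
    by (intro add_nonneg_nonneg sum_nonneg) (auto intro: divide_nonneg_nonneg rhat_nonneg)
  moreover have "0 \<le> 2 / Ltot" using Ltot_pos by simp
  ultimately show ?thesis unfolding Vf_def by (simp add: mult_nonneg_nonneg)
qed

lemma Vf_step:
  assumes K: "1 \<le> K" and b: "K * m < b" and k: "2 \<le> k" "k \<le> b"
  shows "(real k - 1) * ((2 / Ltot) * rhat m b / real b) \<le> Vf m K b - Vf m K (b - k + 1)"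
proof -
  define A where "A = 2 / Ltot"
  have A: "0 < A" using Ltot_pos by (simp add: A_def)
  have b1: "1 \<le> b" using k by simp
  have R: "0 \<le> rhat m b" by (rule rhat_nonneg)
  have Vb: "Vf m K b = A * (rhat m (K*m+1) + (\<Sum>c=K*m+1..b. rhat m c / real c))"
    using b by (simp add: Vf_def A_def)
  show ?thesis
  proof (cases "b - k + 1 \<le> K * m")
    case True
    have "(real k - 1) / real b \<le> 1" using k by simp
    then have "((real k - 1) / real b) * (A * rhat m b) \<le> 1 * (A * rhat m b)"
      using A R by (intro mult_right_mono) auto
    then have "(real k - 1) * (A * rhat m b / real b) \<le> A * rhat m b"
      by (simp add: field_simps)
    also have "\<dots> \<le> A * rhat m (K*m+1)"
      using A b by (intro mult_left_mono rhat_anti) auto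
    also have "\<dots> \<le> A * (rhat m (K*m+1) + (\<Sum>c=K*m+1..b. rhat m c / real c))"
      using A rhat_nonneg by (intro mult_left_mono) (auto intro!: sum_nonneg)
    finally show ?thesis using True Vb by (simp add: Vf_def A_def)
  next
    case False
    define b' where "b' = b - k + 1"
    have bb': "b = b' + (k - 1)" using k by (simp add: b'_def)
    have Vb': "Vf m K b' = A * (rhat m (K*m+1) + (\<Sum>c=K*m+1..b'. rhat m c / real c))"
      using False by (simp add: Vf_def A_def b'_def)
    have split: "(\<Sum>c=K*m+1..b. rhat m c / real c)
        = (\<Sum>c=K*m+1..b'. rhat m c / real c) + (\<Sum>c=b'+1..b. rhat m c / real c)"
      unfolding bb' by (rule sum.ub_add_nat) (use False b'_def in simp)
    have "(\<Sum>c=b'+1..b. rhat m b / real b) \<le> (\<Sum>c=b'+1..b. rhat m c / real c)"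
    proof (rule sum_mono)
      fix c assume c: "c \<in> {b'+1..b}"
      then have c1: "1 \<le> c" "c \<le> b" by auto
      have "rhat m b / real b \<le> rhat m b / real c"
        using c1 R by (intro divide_left_mono) auto
      also have "\<dots> \<le> rhat m c / real c"
        using c1 by (intro divide_right_mono rhat_anti) auto
      finally show "rhat m b / real b \<le> rhat m c / real c" .
    qed
    moreover have "(\<Sum>c=b'+1..b. rhat m b / real b) = real (b - b') * (rhat m b / real b)"
      by simp
    moreover have kb: "real (b - b') = real k - 1" using bb' k by (simp add: of_nat_diff)
    ultimately have "(real k - 1) * (rhat m b / real b) \<le> (\<Sum>c=b'+1..b. rhat m c / real c)"
      unfolding kb[symmetric] by linarith
    then have "A * ((real k - 1) * (rhat m b / real b)) \<le> A * (\<Sum>c=b'+1..b. rhat m c / real c)"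
      using A by (intro mult_left_mono) auto
    then have "(real k - 1) * (A * rhat m b / real b) \<le> A * (\<Sum>c=b'+1..b. rhat m c / real c)"
      by (simp add: mult_ac)
    also have "\<dots> = Vf m K b - Vf m K b'"
      unfolding Vb Vb' split by (simp add: algebra_simps)
    finally show ?thesis by (simp add: A_def b'_def)
  qed
qed

definition Wf :: "nat \<Rightarrow> nat \<Rightarrow> nat \<Rightarrow> real" where
  "Wf m K b = (if b \<le> m then 1 else 0) + Vf m K b"

lemma Wd:
  assumes m: "1 \<le> m" and K: "2 \<le> K" and b: "K * m < b"
  shows "(\<Sum>k=2..b. real (b choose k) * lam L b k * Wf m K (b - k + 1)) \<le> lamtot L b * Wf m K b"
proof -
  define A where "A = 2 / Ltot"
  define R where "R = rhat m b"
  have R: "0 \<le> R" by (simp add: R_def rhat_nonneg)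
  have mK: "2 * m \<le> K * m" using K by simp
  have b2: "2 \<le> b" using b mK m by linarith
  have bm: "\<not> b \<le> m" using b mK m by linarith
  have "(\<Sum>k=2..b. real (b choose k) * lam L b k * Wf m K (b - k + 1))
      = (\<Sum>k=2..b. (if b - k + 1 \<le> m then real (b choose k) else 0) * lam L b k
            + real (b choose k) * lam L b k * Vf m K (b - k + 1))"
    by (rule sum.cong) (auto simp: Wf_def algebra_simps)
  also have "\<dots> = rho m b + (\<Sum>k=2..b. real (b choose k) * lam L b k * Vf m K (b - k + 1))"
    by (simp add: sum.distrib rho_def)
  finally have lhs: "(\<Sum>k=2..b. real (b choose k) * lam L b k * Wf m K (b - k + 1))
      = rho m b + (\<Sum>k=2..b. real (b choose k) * lam L b k * Vf m K (b - k + 1))" .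
  have rhs: "lamtot L b * Wf m K b = (\<Sum>k=2..b. real (b choose k) * lam L b k * Vf m K b)"
    using bm by (simp add: Wf_def lamtot_def sum_distrib_right)
  have "(\<Sum>k=2..b. real (b choose k) * lam L b k * (real k - 1)) * (A * R / real b)
      = (\<Sum>k=2..b. real (b choose k) * lam L b k * ((real k - 1) * (A * R / real b)))"
    unfolding sum_distrib_right by (rule sum.cong) (simp_all add: mult_ac)
  also have "\<dots> \<le> (\<Sum>k=2..b. real (b choose k) * lam L b k * (Vf m K b - Vf m K (b - k + 1)))"
  proof (rule sum_mono)
    fix k assume k: "k \<in> {2..b}"
    have "(real k - 1) * (A * R / real b) \<le> Vf m K b - Vf m K (b - k + 1)"
      using Vf_step[of K m b k] K b k by (simp add: A_def R_def)
    moreover have "0 \<le> real (b choose k) * lam L b k" using lam_nonneg by simp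
    ultimately show "real (b choose k) * lam L b k * ((real k - 1) * (A * R / real b))
        \<le> real (b choose k) * lam L b k * (Vf m K b - Vf m K (b - k + 1))"
      by (rule mult_left_mono)
  qed
  finally have d1: "(\<Sum>k=2..b. real (b choose k) * lam L b k * (real k - 1)) * (A * R / real b)
      \<le> (\<Sum>k=2..b. real (b choose k) * lam L b k * (Vf m K b - Vf m K (b - k + 1)))" .
  have "(real b - 1) * Ltot * (A * R / real b) \<le> (\<Sum>k=2..b. real (b choose k) * lam L b k * (real k - 1)) * (A * R / real b)"
    using drift_sum[OF b2] Ltot_pos R by (intro mult_right_mono) (auto simp: A_def)
  moreover have "(real b - 1) * Ltot * (A * R / real b) = 2 * R * ((real b - 1) / real b)"
    using Ltot_pos b2 by (simp add: A_def field_simps)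
  moreover have "R \<le> 2 * R * ((real b - 1) / real b)"
  proof -
    have "1 / 2 \<le> (real b - 1) / real b" using b2 by (simp add: field_simps)
    then have "(2 * R) * (1 / 2) \<le> (2 * R) * ((real b - 1) / real b)"
      using R by (intro mult_left_mono) auto
    then show ?thesis by simp
  qed
  moreover have "rho m b \<le> R"
  proof -
    have "2 * m < b" using b mK by linarith
    then show ?thesis unfolding R_def by (rule rho_le_rhat[OF m])
  qed
  ultimately have "rho m b \<le> (\<Sum>k=2..b. real (b choose k) * lam L b k * (Vf m K b - Vf m K (b - k + 1)))"
    using d1 by linarith
  also have "\<dots> = (\<Sum>k=2..b. real (b choose k) * lam L b k * Vf m K b) - (\<Sum>k=2..b. real (b choose k) * lam L b k * Vf m K (b - k + 1))"
    by (simp add: sum_subtractf algebra_simps)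
  finally show ?thesis unfolding lhs rhs by simp
qed


lemma meas_Bf: "Bf K \<in> borel_measurable L"
  unfolding Bf_def Hf_def by (rule measL) measurable

lemma int_w: "integrable L (\<lambda>p. 32 + 256 * (3 + \<bar>ln (1 - p)\<bar>))"
proof -
  have "integrable L (\<lambda>p. \<bar>ln (1 - p)\<bar>)"
  proof (rule integrableI_bounded)
    show "(\<lambda>p. \<bar>ln (1 - p)\<bar>) \<in> borel_measurable L" by (rule measL) measurable
    show "(\<integral>\<^sup>+ x. ennreal (norm \<bar>ln (1 - x)\<bar>) \<partial>L) < \<infinity>" using logint by simp
  qed
  then show ?thesis by auto
qed

lemma int_Bf: "1 \<le> K \<Longrightarrow> integrable L (Bf K)"
proof (rule Bochner_Integration.integrable_bound[OF int_w meas_Bf])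
  assume K: "1 \<le> K"
  show "AE x in L. norm (Bf K x) \<le> norm (32 + 256 * (3 + \<bar>ln (1 - x)\<bar>))"
    using AE01
  proof eventually_elim
    case (elim x)
    have a: "0 \<le> Bf K x" "Bf K x \<le> 32 + 256 * (3 + \<bar>ln (1 - x)\<bar>)"
      using Bf_bounds[of x K] elim K by auto
    have "0 \<le> 32 + 256 * (3 + \<bar>ln (1 - x)\<bar>)" by simp
    then show ?case using a by (simp only: real_norm_def)
  qed
qed

lemma Vf_le:
  assumes m: "1 \<le> m" and K: "2 \<le> K"
  shows "Vf m K b \<le> (2 / Ltot) * (\<integral>p. Bf K p \<partial>L)"
proof -
  have K1: "1 \<le> K" using K by simp
  have I0: "0 \<le> (\<integral>p. Bf K p \<partial>L)"
    by (rule integral_nonneg_AE) (use AE01 in \<open>eventually_elim, use Bf_bounds K1 in auto\<close>)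
  have A: "0 < 2 / Ltot" using Ltot_pos by simp
  show ?thesis
  proof (cases "b \<le> K * m")
    case True
    then show ?thesis using I0 A by (simp add: Vf_def)
  next
    case False
    have "rhat m (K*m+1) + (\<Sum>c=K*m+1..b. rhat m c / real c)
        = (\<integral>p. sfun m (K*m+1) p + (\<Sum>c=K*m+1..b. sfun m c p / real c) \<partial>L)"
    proof -
      have "(\<Sum>c=K*m+1..b. rhat m c / real c) = (\<integral>p. (\<Sum>c=K*m+1..b. sfun m c p / real c) \<partial>L)"
        unfolding rhat_def
        using integral_sum[where I="{K*m+1..b}" and f="\<lambda>c p. sfun m c p / real c"]
        by (simp add: int_sfun)
      moreover have "(\<integral>p. sfun m (K*m+1) p + (\<Sum>c=K*m+1..b. sfun m c p / real c) \<partial>L)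
          = (\<integral>p. sfun m (K*m+1) p \<partial>L) + (\<integral>p. (\<Sum>c=K*m+1..b. sfun m c p / real c) \<partial>L)"
        by (rule Bochner_Integration.integral_add) (intro Bochner_Integration.integrable_add Bochner_Integration.integrable_sum integrable_divide_zero int_sfun)+
      ultimately show ?thesis unfolding rhat_def by simp
    qed
    also have "\<dots> \<le> (\<integral>p. Bf K p \<partial>L)"
    proof (rule integral_mono_AE)
      show "integrable L (\<lambda>p. sfun m (K*m+1) p + (\<Sum>c=K*m+1..b. sfun m c p / real c))"
        by (intro Bochner_Integration.integrable_add Bochner_Integration.integrable_sum integrable_divide_zero int_sfun)
      show "integrable L (Bf K)" by (rule int_Bf[OF K1])
      show "AE p in L. sfun m (K*m+1) p + (\<Sum>c=K*m+1..b. sfun m c p / real c) \<le> Bf K p"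
        using AE01 by eventually_elim (use point_bound m K in auto)
    qed
    finally have "(2 / Ltot) * (rhat m (K*m+1) + (\<Sum>c=K*m+1..b. rhat m c / real c)) \<le> (2 / Ltot) * (\<integral>p. Bf K p \<partial>L)"
      using A by (intro mult_left_mono) auto
    then show ?thesis using False by (simp only: Vf_def if_False)
  qed
qed

lemma lim_int_Bf: "(\<lambda>i. \<integral>p. Bf (i + 2) p \<partial>L) \<longlonglongrightarrow> 0"
proof -
  have "(\<lambda>i. \<integral>p. Bf (i + 2) p \<partial>L) \<longlonglongrightarrow> (\<integral>p. 0 \<partial>L)"
  proof (rule integral_dominated_convergence[where w="\<lambda>p. 32 + 256 * (3 + \<bar>ln (1 - p)\<bar>)"])
    show "(\<lambda>p. 0::real) \<in> borel_measurable L" by simp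
    show "\<And>i. Bf (i + 2) \<in> borel_measurable L" by (rule meas_Bf)
    show "integrable L (\<lambda>p. 32 + 256 * (3 + \<bar>ln (1 - p)\<bar>))" by (rule int_w)
    show "AE x in L. (\<lambda>i. Bf (i + 2) x) \<longlonglongrightarrow> 0"
      using AE01 by eventually_elim (intro Bf_lim; simp)
    show "\<And>i. AE x in L. norm (Bf (i + 2) x) \<le> 32 + 256 * (3 + \<bar>ln (1 - x)\<bar>)"
      using AE01 by eventually_elim (use Bf_bounds in auto)
  qed
  then show ?thesis by simp
qed

lemma card_singletons: "card (singletons n) = n"
  unfolding singletons_def by (subst card_image) (auto simp: inj_on_def)

lemma main_loc:
  "\<forall>\<epsilon>>0. \<exists>K::nat. K > 0 \<and> (\<forall>m n::nat. 1 \<le> m \<and> m < n \<longrightarrow>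
     measure_pmf.prob (coal_path L n)
       {xs. \<exists>P\<in>set xs. m < card P \<and> card P \<le> K * m} > 1 - \<epsilon>)"
proof (intro allI impI)
  fix \<epsilon> :: real assume e: "0 < \<epsilon>"
  have "(\<lambda>i. (2 / Ltot) * (\<integral>p. Bf (i + 2) p \<partial>L)) \<longlonglongrightarrow> (2 / Ltot) * 0"
    by (intro tendsto_mult tendsto_const lim_int_Bf)
  then have "eventually (\<lambda>i. (2 / Ltot) * (\<integral>p. Bf (i + 2) p \<partial>L) < \<epsilon>) sequentially"
    using e by (intro order_tendstoD(2)) auto
  then obtain i where i: "(2 / Ltot) * (\<integral>p. Bf (i + 2) p \<partial>L) < \<epsilon>"
    by (meson eventually_sequentially order_refl)
  define K where "K = i + 2"
  have K: "2 \<le> K" by (simp add: K_def)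
  show "\<exists>K::nat. K > 0 \<and> (\<forall>m n::nat. 1 \<le> m \<and> m < n \<longrightarrow>
     measure_pmf.prob (coal_path L n)
       {xs. \<exists>P\<in>set xs. m < card P \<and> card P \<le> K * m} > 1 - \<epsilon>)"
  proof (intro exI conjI allI impI)
    show "0 < K" using K by simp
    fix m n :: nat assume mn: "1 \<le> m \<and> m < n"
    then have m: "1 \<le> m" and n: "m < n" by auto
    have K1: "1 \<le> K" using K by simp
    have pb: "measure_pmf.prob (path L n (singletons n)) (Bad m K) \<le> Wf m K (card (singletons n))"
    proof (rule path_bound[OF m K1])
      show "\<And>b. b \<le> m \<Longrightarrow> 1 \<le> Wf m K b" using Vf_nonneg by (simp add: Wf_def)
      show "\<And>b. 0 \<le> Wf m K b" using Vf_nonneg by (simp add: Wf_def add_nonneg_nonneg)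
      show "\<And>b. K * m < b \<Longrightarrow> (\<Sum>k=2..b. real (b choose k) * lam L b k * Wf m K (b - k + 1)) \<le> lamtot L b * Wf m K b"
        by (rule Wd[OF m K])
      show "good (singletons n)" by (rule good_singletons)
      show "card (singletons n) \<le> n + 1" by (simp add: card_singletons)
    qed
    have "Wf m K n = Vf m K n" using n by (simp add: Wf_def)
    also have "\<dots> \<le> (2 / Ltot) * (\<integral>p. Bf K p \<partial>L)" by (rule Vf_le[OF m K])
    finally have "measure_pmf.prob (coal_path L n) (Bad m K) < \<epsilon>"
      using pb i by (simp add: coal_path_def card_singletons K_def)
    moreover have "{xs. \<exists>P\<in>set xs. m < card P \<and> card P \<le> K * m} = UNIV - Bad m K"
      by (auto simp: Bad_def)
    moreover have "measure_pmf.prob (coal_path L n) (UNIV - Bad m K) = 1 - measure_pmf.prob (coal_path L n) (Bad m K)"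
      using measure_pmf.prob_compl[of "Bad m K" "coal_path L n"] by simp
    ultimately show "measure_pmf.prob (coal_path L n) {xs. \<exists>P\<in>set xs. m < card P \<and> card P \<le> K * m} > 1 - \<epsilon>"
      by simp
  qed
qed

end

theorem mainTheorem8:
  fixes L :: "real measure"
  assumes "finite_measure L"
    and "sets L = sets borel"
    and "emeasure L (UNIV - {0..1}) = 0"
    and "emeasure L {0..1} \<noteq> 0"
    and "emeasure L {1} = 0"
    and "(\<integral>\<^sup>+ p. ennreal \<bar>ln (1 - p)\<bar> \<partial>L) < \<infinity>"
  shows "\<forall>\<epsilon>>0. \<exists>K::nat. K > 0 \<and> (\<forall>m n::nat. 1 \<le> m \<and> m < n \<longrightarrow>
     measure_pmf.prob (coal_path L n)
       {xs. \<exists>P\<in>set xs. m < card P \<and> card P \<le> K * m} > 1 - \<epsilon>)"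
proof -
  interpret coal L by (rule coal.intro) (rule assms)+
  show ?thesis by (rule main_loc)
qed

end
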